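(* Let $\mathcal{P}$ be a profile of unrooted phylogenetic trees whose display graph $G(\mathcal{P})$ is connected. Let $F$ be any minimal separator of $\mathrm{LG}(\mathcal{P})$ and let $u$ be any vertex of any input tree. Then $\mathrm{Inc}(u)\not\subseteq F$.
   Context: A phylogenetic tree is an unrooted tree whose leaves are bijectively labeled (leaves identified with labels; internal vertices have degree at least three). A profile $\mathcal{P}=\{T_1,\dots,T_k\}$ is a finite collection of phylogenetic trees (the input trees); internal vertices of distinct trees are disjoint, while leaves with the same label are the same vertex. The display graph $G(\mathcal{P})$ has vertex set $\bigcup_i V(T_i)$ and edge set $\bigcup_i E(T_i)$. $\mathrm{LG}(\mathcal{P})$ is the line graph of $G(\mathcal{P})$ (vertices are edges of $G(\mathcal{P})$, adjacent iff they share an endpoint). For a vertex $u$ of an input tree, $\mathrm{Inc}(u)$ is the set of edges of $G(\mathcal{P})$ incident with $u$, i.e., the set of vertices $e$ of $\mathrm{LG}(\mathcal{P})$ with $u\in e$. In a graph $G$, for nonadjacent vertices $a,b$, an $a$-$b$ separator is $U\subset V(G)$ with $a,b$ in different components of $G-U$; it is minimal if no proper subset is an $a$-$b$ separator; a minimal separator is a minimal $a$-$b$ separator for some nonadjacent $a,b$. *)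

theory Defs
  imports Main
begin

definition simple_graph :: "'a set \<Rightarrow> 'a set set \<Rightarrow> bool" where
  "simple_graph V E \<longleftrightarrow> E \<subseteq> {{x, y} | x y. x \<in> V \<and> y \<in> V \<and> x \<noteq> y}"

definition reach :: "'a set \<Rightarrow> 'a set set \<Rightarrow> 'a \<Rightarrow> 'a \<Rightarrow> bool" where
  "reach V E = (\<lambda>x y. x \<in> V \<and> y \<in> V \<and> {x, y} \<in> E)\<^sup>*\<^sup>*"

definition connected_graph :: "'a set \<Rightarrow> 'a set set \<Rightarrow> bool" where
  "connected_graph V E \<longleftrightarrow> (\<forall>x\<in>V. \<forall>y\<in>V. reach V E x y)"

definition deg :: "'a set set \<Rightarrow> 'a \<Rightarrow> nat" where
  "deg E v = card {e \<in> E. v \<in> e}"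

text \<open>A (finite) tree: nonempty, connected, and minimally connected
  (removing any edge disconnects its endpoints, i.e. acyclic).\<close>
definition is_tree :: "'a set \<Rightarrow> 'a set set \<Rightarrow> bool" where
  "is_tree V E \<longleftrightarrow> finite V \<and> V \<noteq> {} \<and> simple_graph V E \<and> connected_graph V E \<and>
     (\<forall>x y. {x, y} \<in> E \<longrightarrow> \<not> reach V (E - {{x, y}}) x y)"

definition leaves :: "'a set \<Rightarrow> 'a set set \<Rightarrow> 'a set" where
  "leaves V E = {v \<in> V. deg E v \<le> 1}"

text \<open>Phylogenetic tree: leaves are identified with their labels;
  internal vertices have degree at least three.\<close>
definition phylo_tree :: "'a set \<Rightarrow> 'a set set \<Rightarrow> bool" where
  "phylo_tree V E \<longleftrightarrow> is_tree V E \<and> (\<forall>v \<in> V - leaves V E. 3 \<le> deg E v)"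

definition profile :: "('a set \<times> 'a set set) set \<Rightarrow> bool" where
  "profile P \<longleftrightarrow> finite P \<and> (\<forall>(V, E) \<in> P. phylo_tree V E) \<and>
     (\<forall>T1 \<in> P. \<forall>T2 \<in> P. T1 \<noteq> T2 \<longrightarrow>
        fst T1 \<inter> fst T2 \<subseteq> leaves (fst T1) (snd T1) \<inter> leaves (fst T2) (snd T2))"

definition display_V :: "('a set \<times> 'a set set) set \<Rightarrow> 'a set" where
  "display_V P = \<Union> (fst ` P)"

definition display_E :: "('a set \<times> 'a set set) set \<Rightarrow> 'a set set" where
  "display_E P = \<Union> (snd ` P)"

definition line_edges :: "'a set set \<Rightarrow> 'a set set set" where
  "line_edges E = {{e, f} | e f. e \<in> E \<and> f \<in> E \<and> e \<noteq> f \<and> e \<inter> f \<noteq> {}}"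

definition Inc :: "('a set \<times> 'a set set) set \<Rightarrow> 'a \<Rightarrow> 'a set set" where
  "Inc P u = {e \<in> display_E P. u \<in> e}"

definition separator :: "'a set \<Rightarrow> 'a set set \<Rightarrow> 'a \<Rightarrow> 'a \<Rightarrow> 'a set \<Rightarrow> bool" where
  "separator V E a b U \<longleftrightarrow> U \<subseteq> V \<and> a \<in> V - U \<and> b \<in> V - U \<and> \<not> reach (V - U) E a b"

definition minimal_ab_separator :: "'a set \<Rightarrow> 'a set set \<Rightarrow> 'a \<Rightarrow> 'a \<Rightarrow> 'a set \<Rightarrow> bool" where
  "minimal_ab_separator V E a b U \<longleftrightarrow> separator V E a b U \<and> (\<forall>U'. U' \<subset> U \<longrightarrow> \<not> separator V E a b U')"

definition minimal_separator :: "'a set \<Rightarrow> 'a set set \<Rightarrow> 'a set \<Rightarrow> bool" where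
  "minimal_separator V E U \<longleftrightarrow>
     (\<exists>a b. a \<in> V \<and> b \<in> V \<and> a \<noteq> b \<and> {a, b} \<notin> E \<and> minimal_ab_separator V E a b U)"

end

theory Submission
  imports Defs
begin
lemma reach_sym: "reach V E x y \<Longrightarrow> reach V E y x"
  unfolding reach_def
proof (induction rule: rtranclp_induct)
  case base then show ?case by simp
next
  case (step y z)
  have "{z,y} \<in> E" using step(2) by (simp add: insert_commute)
  then have "(\<lambda>x y. x \<in> V \<and> y \<in> V \<and> {x, y} \<in> E) z y" using step(2) by simp
  then show ?case using step(3) by (rule converse_rtranclp_into_rtranclp)
qed

lemma reach_in: "reach V E a y \<Longrightarrow> a \<in> V \<Longrightarrow> y \<in> V"
  unfolding reach_def by (induction rule: rtranclp_induct) auto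

lemma reach_step: "reach V E a y \<Longrightarrow> y \<in> V \<Longrightarrow> z \<in> V \<Longrightarrow> {y,z} \<in> E \<Longrightarrow> reach V E a z"
  unfolding reach_def by (simp add: rtranclp.rtrancl_into_rtrancl)

lemma through_f:
  assumes "reach (insert f W) E a y" "a \<in> W"
  shows "reach W E a y \<or> (\<exists>g\<in>W. reach W E a g \<and> {g,f} \<in> E)"
  using assms(1) unfolding reach_def[of "insert f W"]
proof (induction rule: rtranclp_induct)
  case base then show ?case using assms(2) by (simp add: reach_def)
next
  case (step y z)
  have yz: "y \<in> insert f W" "z \<in> insert f W" "{y,z} \<in> E" using step(2) by simp_all
  show ?case
  proof (cases "reach W E a y")
    case True
    hence yW: "y \<in> W" using reach_in assms(2) by metis
    show ?thesis
    proof (cases "z = f")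
      case True then show ?thesis using yz yW \<open>reach W E a y\<close> by blast
    next
      case False
      then have "z \<in> W" using yz by blast
      then show ?thesis using reach_step[OF \<open>reach W E a y\<close> yW \<open>z \<in> W\<close> yz(3)] by blast
    qed
  next
    case False then show ?thesis using step(3) by blast
  qed
qed

lemma le_int: "{e,f} \<in> line_edges X \<Longrightarrow> e \<inter> f \<noteq> {}"
  unfolding line_edges_def by (auto simp: doubleton_eq_iff)

lemma le_intro: "e \<in> X \<Longrightarrow> f \<in> X \<Longrightarrow> e \<noteq> f \<Longrightarrow> w \<in> e \<Longrightarrow> w \<in> f \<Longrightarrow> {e,f} \<in> line_edges X"
  unfolding line_edges_def by blast

lemma edge_form:
  assumes "profile P" "e \<in> display_E P"
  shows "\<exists>x y. e = {x,y} \<and> x \<noteq> y \<and> x \<in> display_V P \<and> y \<in> display_V P"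
proof -
  obtain V' E' where T': "(V',E') \<in> P" "e \<in> E'" using assms(2) unfolding display_E_def by force
  have pt: "\<forall>(V, E) \<in> P. phylo_tree V E" using assms(1) unfolding profile_def by simp
  have "phylo_tree V' E'" using bspec[OF pt T'(1)] by simp
  hence "simple_graph V' E'" unfolding phylo_tree_def is_tree_def by simp
  hence "e \<in> {{x, y} | x y. x \<in> V' \<and> y \<in> V' \<and> x \<noteq> y}" using T'(2) unfolding simple_graph_def by blast
  then obtain x y where "e = {x,y}" "x \<noteq> y" "x \<in> V'" "y \<in> V'" by blast
  moreover have "V' \<subseteq> display_V P" using T'(1) unfolding display_V_def by force
  ultimately show ?thesis by blast
qed
theorem lemma3:
  fixes P :: "('a set \<times> 'a set set) set"
  assumes "profile P"
    and "connected_graph (display_V P) (display_E P)"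
    and "minimal_separator (display_E P) (line_edges (display_E P)) F"
    and "T \<in> P" and "u \<in> fst T"
  shows "\<not> Inc P u \<subseteq> F"
proof
  assume sub: "Inc P u \<subseteq> F"
  define V where "V = display_E P"
  define E where "E = line_edges (display_E P)"
  obtain a b where ab: "a \<in> V" "b \<in> V" "minimal_ab_separator V E a b F"
    using assms(3) unfolding minimal_separator_def V_def E_def by blast
  have uV: "u \<in> display_V P" using assms(4,5) unfolding display_V_def by blast
  obtain f where f: "f \<in> Inc P u"
  proof -
    obtain x y where xy: "a = {x,y}" "x \<noteq> y" "x \<in> display_V P"
      using edge_form[OF assms(1)] ab(1) unfolding V_def by blast
    have r: "reach (display_V P) (display_E P) u x" using assms(2) uV xy(3)
      unfolding connected_graph_def by blast
    show ?thesis
    proof (cases "u = x")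
      case True then show ?thesis using that ab(1) xy unfolding V_def Inc_def by blast
    next
      case False
      have "(\<lambda>x y. x \<in> display_V P \<and> y \<in> display_V P \<and> {x, y} \<in> display_E P)\<^sup>*\<^sup>* u x"
        using r unfolding reach_def .
      then obtain z where "{u,z} \<in> display_E P"
        using False by (cases rule: converse_rtranclpE) auto
      then show ?thesis using that unfolding Inc_def by blast
    qed
  qed
  have fF: "f \<in> F" using f sub by blast
  have fE: "f \<in> V" and uf: "u \<in> f" using f unfolding Inc_def V_def by auto
  obtain x y where fxy: "f = {x,y}" "x \<noteq> y"
    using edge_form[OF assms(1)] fE unfolding V_def by blast
  obtain w where fw: "f = {u,w}" using fxy uf by blast
  have sep: "separator V E a b F" using ab(3) unfolding minimal_ab_separator_def by blast
  have FV: "F \<subseteq> V" using sep unfolding separator_def by blast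
  have aW: "a \<in> V - F" and bW: "b \<in> V - F" using sep unfolding separator_def by auto
  have nr: "\<not> reach (V - F) E a b" using sep unfolding separator_def by blast
  have "F - {f} \<subset> F" using fF by blast
  hence "\<not> separator V E a b (F - {f})"
    using ab(3) unfolding minimal_ab_separator_def by blast
  hence r1: "reach (V - (F - {f})) E a b"
    using FV aW bW unfolding separator_def by blast
  have ins: "V - (F - {f}) = insert f (V - F)" using fF FV by blast
  have r1': "reach (insert f (V - F)) E a b" using r1 ins by simp
  have r2': "reach (insert f (V - F)) E b a" using reach_sym[OF r1'] .
  have nr2: "\<not> reach (V - F) E b a" using reach_sym[of "V - F" E b a] nr by blast
  obtain g where g: "g \<in> V - F" "reach (V - F) E a g" "{g,f} \<in> E"
    using through_f[OF r1' aW] nr by blast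
  obtain h where h: "h \<in> V - F" "reach (V - F) E b h" "{h,f} \<in> E"
    using through_f[OF r2' bW] nr2 by blast
  have wg: "w \<in> e" if "e \<in> V - F" "{e,f} \<in> E" for e
  proof -
    have "e \<inter> f \<noteq> {}" using le_int that(2) unfolding E_def by blast
    moreover have "u \<notin> e" using that(1) sub unfolding Inc_def V_def by blast
    ultimately show ?thesis using fw by blast
  qed
  have wgg: "w \<in> g" using wg g(1) g(3) by blast
  have whh: "w \<in> h" using wg h(1) h(3) by blast
  have "reach (V - F) E a b"
  proof (cases "g = h")
    case True
    have "reach (V - F) E g b" using reach_sym[OF h(2)] True by simp
    then show ?thesis using g(2) unfolding reach_def by (rule rtranclp_trans[rotated])
  next
    case False
    have "{g,h} \<in> E" using le_intro[OF _ _ False wgg whh] g(1) h(1)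
      unfolding E_def V_def by blast
    hence ah: "reach (V - F) E a h" using reach_step[OF g(2) g(1) h(1)] by blast
    have "reach (V - F) E h b" using reach_sym[OF h(2)] .
    then show ?thesis using ah unfolding reach_def by (rule rtranclp_trans[rotated])
  qed
  with nr show False by blast
qed

end
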